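(* Let $f$ satisfy $(\mathcal A)$ and let $p\ge1$. Let $x_0,y_{-1},y_0\in\mathcal H$ with $y_0\neq y_{-1}$, let $\tau_0=0$, and define recursively for $k\ge0$ $$\lambda_k=\|y_k-y_{k-1}\|^{-\frac{p-1}{p}},\quad y_{k+1}=\operatorname{prox}_{\lambda_k f}(y_k),\quad \tau_{k+1}=\tau_k+\lambda_k,\quad x_{k+1}=\Big(1-\frac{\lambda_k}{\tau_{k+1}}\Big)x_k+\frac{\lambda_k}{\tau_{k+1}}y_{k+1},$$ and assume $\nabla f(y_k)\neq0$ for all $k\ge0$. Then $f(x_k)-\inf_{\mathcal H}f=O\big(k^{-(2-\frac1p)}\big)$ as $k\to+\infty$, and $(x_k)_{k\ge0}$ converges weakly to an element of $S=\operatorname{argmin} f$.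
   Context: $\mathcal H$ is a real Hilbert space. Assumption $(\mathcal A)$: $f:\mathcal H\to\mathbb R$ is convex and continuously differentiable, $S=\operatorname{argmin}_{\mathcal H} f\neq\emptyset$, and $\nabla f$ is Lipschitz continuous on bounded subsets of $\mathcal H$. For $\lambda>0$, $\operatorname{prox}_{\lambda f}(y)=\operatorname{argmin}_{u\in\mathcal H}\{f(u)+\frac{1}{2\lambda}\|u-y\|^2\}$. *)

theory Defs
  imports "HOL-Analysis.Analysis" "HOL-Library.Landau_Symbols"
begin

definition prox :: "real \<Rightarrow> ('a::real_normed_vector \<Rightarrow> real) \<Rightarrow> 'a \<Rightarrow> 'a" where
  "prox lam f y = (THE u. \<forall>v. f u + (norm (u - y))\<^sup>2 / (2 * lam) \<le> f v + (norm (v - y))\<^sup>2 / (2 * lam))"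

definition weak_conv :: "(nat \<Rightarrow> 'a::real_inner) \<Rightarrow> 'a \<Rightarrow> bool" where
  "weak_conv x z \<longleftrightarrow> (\<forall>v. (\<lambda>k. x k \<bullet> v) \<longlonglongrightarrow> z \<bullet> v)"

end

theory Submission
  imports Defs
begin

lemma grad_ineq:
  fixes f :: "'a::real_inner \<Rightarrow> real"
  assumes cvx: "convex_on UNIV f"
    and d: "(f has_derivative (\<lambda>h. g \<bullet> h)) (at u)"
  shows "f u + g \<bullet> (v - u) \<le> f v"
proof -
  define h where "h t = f (u + t *\<^sub>R (v - u))" for t :: real
  have ch: "convex_on UNIV h"
    unfolding convex_on_def h_def
  proof (intro conjI ballI allI impI, simp)
    fix x y :: real and a b :: real
    assume ab: "a \<ge> 0" "b \<ge> 0" "a + b = 1"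
    have "u + (a *\<^sub>R x + b *\<^sub>R y) *\<^sub>R (v - u) = a *\<^sub>R (u + x *\<^sub>R (v - u)) + b *\<^sub>R (u + y *\<^sub>R (v - u))"
      using ab by (simp add: algebra_simps flip: scaleR_add_left)
    then show "f (u + (a *\<^sub>R x + b *\<^sub>R y) *\<^sub>R (v - u)) \<le> a * f (u + x *\<^sub>R (v - u)) + b * f (u + y *\<^sub>R (v - u))"
      using cvx ab unfolding convex_on_def by simp
  qed
  have "((\<lambda>r. u + r *\<^sub>R (v - u)) has_derivative (\<lambda>r. r *\<^sub>R (v - u))) (at 0)"
    by (intro derivative_eq_intros) auto
  moreover have d': "(f has_derivative (\<lambda>h. g \<bullet> h)) (at (u + 0 *\<^sub>R (v - u)))" using d by simp
  ultimately have "(h has_derivative (\<lambda>k. g \<bullet> (k *\<^sub>R (v - u)))) (at 0)"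
    unfolding h_def by (rule has_derivative_compose)
  then have "(h has_field_derivative (g \<bullet> (v - u))) (at 0)"
    unfolding has_field_derivative_def by (simp add: mult.commute[of _ "g \<bullet> (v - u)"])
  then have "h 1 - h 0 \<ge> (g \<bullet> (v - u)) * (1 - 0)"
    by (intro convex_on_imp_above_tangent[OF ch]) auto
  then show ?thesis unfolding h_def by simp
qed


lemma exists_min_strong:
  fixes \<phi> :: "'a::{real_inner,complete_space} \<Rightarrow> real"
  assumes C: "closed C" "C \<noteq> {}"
    and cont: "continuous_on C \<phi>"
    and bdd: "\<And>u. u \<in> C \<Longrightarrow> b \<le> \<phi> u"
    and c: "c > 0"
    and mid: "\<And>u v. u \<in> C \<Longrightarrow> v \<in> C \<Longrightarrow> (1/2) *\<^sub>R (u + v) \<in> C \<and>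
                 \<phi> ((1/2) *\<^sub>R (u + v)) \<le> (\<phi> u + \<phi> v) / 2 - c * (norm (u - v))\<^sup>2"
  shows "\<exists>u\<in>C. \<forall>v\<in>C. \<phi> u \<le> \<phi> v"
proof -
  define ep where "ep = (\<lambda>n::nat. 1 / real (Suc n))"
  have ep_pos: "ep n > 0" for n by (simp add: ep_def)
  have ep_mono: "M \<le> n \<Longrightarrow> ep n \<le> ep M" for M n by (simp add: ep_def frac_le)
  have ep_lim: "ep \<longlonglongrightarrow> 0" unfolding ep_def
    using LIMSEQ_inverse_real_of_nat by (simp add: inverse_eq_divide)
  define m where "m = Inf (\<phi> ` C)"
  have bb: "bdd_below (\<phi> ` C)" using bdd by (auto simp: bdd_below_def)
  have mle: "m \<le> \<phi> u" if "u \<in> C" for u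
    unfolding m_def using bb that by (simp add: cInf_lower)
  have "\<exists>s\<in>C. \<phi> s < m + ep n" for n
  proof -
    have "\<phi> ` C \<noteq> {}" using C by auto
    moreover have "m < m + ep n" using ep_pos[of n] by simp
    moreover have "Inf (\<phi> ` C) = m" by (simp add: m_def)
    ultimately obtain t where "t \<in> \<phi> ` C" "t < m + ep n"
      using cInf_lessD[of "\<phi> ` C" "m + ep n"] by auto
    then show ?thesis by auto
  qed
  then have "\<forall>n. \<exists>s. s \<in> C \<and> \<phi> s < m + ep n" by blast
  then obtain s where s: "\<forall>n. s n \<in> C \<and> \<phi> (s n) < m + ep n"
    using choice[of "\<lambda>n s. s \<in> C \<and> \<phi> s < m + ep n"] by blast
  then have sC: "\<And>n. s n \<in> C" and sl: "\<And>n. \<phi> (s n) < m + ep n" by auto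
  have key: "c * (norm (s n - s k))\<^sup>2 \<le> (ep n + ep k) / 2" for n k
  proof -
    have "m \<le> \<phi> ((1/2) *\<^sub>R (s n + s k))" using mid[OF sC sC] mle by blast
    also have "\<dots> \<le> (\<phi> (s n) + \<phi> (s k)) / 2 - c * (norm (s n - s k))\<^sup>2" using mid[OF sC sC] by blast
    finally show ?thesis using sl[of n] sl[of k] by argo
  qed
  have "Cauchy s"
  proof (rule metric_CauchyI)
    fix e :: real assume e: "e > 0"
    have "c * e\<^sup>2 > 0" using c e by simp
    then have "eventually (\<lambda>n. ep n < c * e\<^sup>2) sequentially"
      using ep_lim order_tendstoD(2) by blast
    then obtain M where M: "ep M < c * e\<^sup>2" by (auto simp: eventually_sequentially)
    show "\<exists>M. \<forall>m\<ge>M. \<forall>n\<ge>M. dist (s m) (s n) < e"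
    proof (intro exI allI impI)
      fix n k assume nk: "M \<le> n" "M \<le> k"
      have "c * (norm (s n - s k))\<^sup>2 \<le> (ep n + ep k) / 2" by (rule key)
      also have "\<dots> \<le> ep M" using ep_mono[OF nk(1)] ep_mono[OF nk(2)] by argo
      also have "\<dots> < c * e\<^sup>2" by (rule M)
      finally have "(norm (s n - s k))\<^sup>2 < e\<^sup>2" using c by simp
      then have "norm (s n - s k) < e" using e by (simp add: power_less_imp_less_base)
      then show "dist (s n) (s k) < e" by (simp add: dist_norm)
    qed
  qed
  then obtain u where lim: "s \<longlonglongrightarrow> u" using convergent_eq_Cauchy by blast
  have uC: "u \<in> C" using closed_sequentially[OF C(1) sC lim] .
  have lim2: "(\<lambda>n. \<phi> (s n)) \<longlonglongrightarrow> \<phi> u"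
    using continuous_on_tendsto_compose[OF cont lim uC] sC by auto
  have lim3: "(\<lambda>n. m + ep n) \<longlonglongrightarrow> m"
    using tendsto_add[OF tendsto_const[of m] ep_lim] by simp
  have "\<phi> u \<le> m"
    by (rule LIMSEQ_le[OF lim2 lim3]) (use sl less_imp_le in blast)
  then show ?thesis using uC mle by force
qed

lemma min_strong_unique:
  fixes \<phi> :: "'a::{real_inner} \<Rightarrow> real"
  assumes c: "c > 0"
    and mid: "\<And>u v. u \<in> C \<Longrightarrow> v \<in> C \<Longrightarrow> (1/2) *\<^sub>R (u + v) \<in> C \<and>
                 \<phi> ((1/2) *\<^sub>R (u + v)) \<le> (\<phi> u + \<phi> v) / 2 - c * (norm (u - v))\<^sup>2"
    and u: "u \<in> C" "\<forall>v\<in>C. \<phi> u \<le> \<phi> v"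
    and w: "w \<in> C" "\<forall>v\<in>C. \<phi> w \<le> \<phi> v"
  shows "u = w"
proof -
  have "\<phi> u \<le> \<phi> ((1/2) *\<^sub>R (u + w))" using u mid[OF u(1) w(1)] by blast
  also have "\<dots> \<le> (\<phi> u + \<phi> w) / 2 - c * (norm (u - w))\<^sup>2" using mid[OF u(1) w(1)] by blast
  finally have "c * (norm (u - w))\<^sup>2 \<le> 0" using u w by force
  then have "(norm (u - w))\<^sup>2 \<le> 0" using c by (simp add: mult_le_0_iff)
  then show ?thesis by simp
qed

lemma norm_mid_sq:
  fixes u v :: "'a::real_inner"
  shows "(norm ((1/2) *\<^sub>R (u + v)))\<^sup>2 = ((norm u)\<^sup>2 + (norm v)\<^sup>2) / 2 - (norm (u - v))\<^sup>2 / 4"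
  unfolding power2_norm_eq_inner
  apply (simp add: inner_add_left inner_add_right inner_diff_left inner_diff_right inner_commute algebra_simps)
  by (simp add: field_simps)

lemma prox_char:
  fixes f :: "'a::{real_inner,complete_space} \<Rightarrow> real"
  assumes cvx: "convex_on UNIV f"
    and grad: "\<And>u. (f has_derivative (\<lambda>h. gradf u \<bullet> h)) (at u)"
    and Sne: "\<exists>z. \<forall>u. f z \<le> f u"
    and lam: "lam > 0"
  shows "prox lam f y = y - lam *\<^sub>R gradf (prox lam f y)"
proof -
  define \<phi> where "\<phi> u = f u + (norm (u - y))\<^sup>2 / (2 * lam)" for u
  obtain z where z: "\<forall>u. f z \<le> f u" using Sne by blast
  have fcont: "continuous_on UNIV f"
    using grad has_derivative_continuous continuous_at_imp_continuous_on by blast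
  have cont: "continuous_on UNIV \<phi>" unfolding \<phi>_def
    using lam by (intro continuous_intros fcont) auto
  have bdd: "f z \<le> \<phi> u" for u unfolding \<phi>_def using z lam by (simp add: add_increasing2)
  have mid: "(1/2) *\<^sub>R (u + v) \<in> UNIV \<and>
       \<phi> ((1/2) *\<^sub>R (u + v)) \<le> (\<phi> u + \<phi> v) / 2 - (1 / (8 * lam)) * (norm (u - v))\<^sup>2" for u v
  proof -
    have f1: "f ((1/2) *\<^sub>R u + (1/2) *\<^sub>R v) \<le> (1/2) * f u + (1/2) * f v"
      using convex_onD[OF cvx, of "1/2" u v] by simp
    have e: "(1/2) *\<^sub>R (u + v) - y = (1/2) *\<^sub>R ((u - y) + (v - y))"
      by (simp add: algebra_simps flip: scaleR_add_left)
    have n: "(norm ((1/2) *\<^sub>R (u + v) - y))\<^sup>2 = ((norm (u - y))\<^sup>2 + (norm (v - y))\<^sup>2) / 2 - (norm (u - v))\<^sup>2 / 4"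
      unfolding e norm_mid_sq by simp
    have n2: "(norm ((1/2) *\<^sub>R (u + v) - y))\<^sup>2 / (2 * lam) =
      ((norm (u - y))\<^sup>2 / (2 * lam) + (norm (v - y))\<^sup>2 / (2 * lam)) / 2 - (1 / (8 * lam)) * (norm (u - v))\<^sup>2"
      unfolding n using lam by (simp add: field_simps)
    have f2: "f ((1/2) *\<^sub>R (u + v)) \<le> (f u + f v) / 2" using f1 by (simp add: scaleR_add_right)
    have "\<phi> ((1/2) *\<^sub>R (u + v)) \<le> (\<phi> u + \<phi> v) / 2 - (1 / (8 * lam)) * (norm (u - v))\<^sup>2"
      unfolding \<phi>_def using f2 n2 by argo
    then show ?thesis by simp
  qed
  obtain u0 where u0: "\<forall>v. \<phi> u0 \<le> \<phi> v"
    using exists_min_strong[of UNIV \<phi> "f z" "1 / (8 * lam)"] cont bdd mid lam by auto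
  have uniq: "u0 = w" if "\<forall>v. \<phi> w \<le> \<phi> v" for w
    using min_strong_unique[of "1 / (8 * lam)" UNIV \<phi> u0 w] mid lam u0 that by auto
  have px: "prox lam f y = u0"
  proof -
    have "prox lam f y = (THE u. \<forall>v. \<phi> u \<le> \<phi> v)" unfolding prox_def \<phi>_def by simp
    also have "\<dots> = u0" by (rule the_equality[where P="\<lambda>u. \<forall>v. \<phi> u \<le> \<phi> v", OF u0]) (use uniq in metis)
    finally show ?thesis .
  qed
  have "(\<phi> has_derivative (\<lambda>h. gradf u0 \<bullet> h + (h \<bullet> (u0 - y) + (u0 - y) \<bullet> h) / (2 * lam))) (at u0)"
    unfolding \<phi>_def power2_norm_eq_inner
    by (intro derivative_eq_intros) (use lam grad in auto)
  moreover have "eventually (\<lambda>v. \<phi> u0 \<le> \<phi> v) (at u0)" using u0 by simp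
  ultimately have D: "(\<lambda>h. gradf u0 \<bullet> h + (h \<bullet> (u0 - y) + (u0 - y) \<bullet> h) / (2 * lam)) = (\<lambda>h. 0)"
    by (rule has_derivative_local_min)
  define w where "w = lam *\<^sub>R gradf u0 + (u0 - y)"
  have "gradf u0 \<bullet> w + (w \<bullet> (u0 - y) + (u0 - y) \<bullet> w) / (2 * lam) = 0"
    using fun_cong[OF D, of w] by simp
  then have E: "gradf u0 \<bullet> w + ((u0 - y) \<bullet> w) / lam = 0"
    by (simp add: inner_commute)
  have E2: "lam * (gradf u0 \<bullet> w) + (u0 - y) \<bullet> w = 0"
  proof -
    have "lam * (gradf u0 \<bullet> w + ((u0 - y) \<bullet> w) / lam) = 0" using E by simp
    then show ?thesis using lam by (simp add: distrib_left)
  qed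
  have "w \<bullet> w = lam * (gradf u0 \<bullet> w) + (u0 - y) \<bullet> w"
    unfolding w_def[symmetric] by (simp add: w_def inner_add_left)
  then have "w \<bullet> w = 0" using E2 by simp
  then have "w = 0" using lam by simp
  then show ?thesis unfolding px w_def by (simp add: algebra_simps)
qed



lemma powr_diff_le:
  fixes x y g :: real
  assumes g: "g \<ge> 1" and y: "0 < y" "y \<le> x"
  shows "x powr g - y powr g \<le> g * x powr (g - 1) * (x - y)"
proof -
  have x: "x > 0" using y by simp
  have "((\<lambda>z. z powr g) has_real_derivative g * x powr (g - 1)) (at x within {0<..})"
    using has_real_derivative_powr[OF x] by (rule has_field_derivative_at_within)
  then have "y powr g - x powr g \<ge> g * x powr (g - 1) * (y - x)"
    using x y by (intro convex_on_imp_above_tangent[OF powr_convex[OF g]])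
      (auto simp: interior_open convex_connected)
  then show ?thesis by (simp add: algebra_simps)
qed

lemma growth:
  fixes \<Phi> :: "nat \<Rightarrow> real"
  assumes P0: "\<Phi> 0 > 0" and c: "c > 0" and b: "0 \<le> b" "b < 1"
    and step: "\<And>k. \<Phi> (Suc k) \<ge> \<Phi> k + c * \<Phi> k powr b"
  shows "\<exists>C>0. \<forall>k. C * real (Suc k) powr (1 / (1 - b)) \<le> \<Phi> k"
proof -
  define g where "g = 1 / (1 - b)"
  have g1: "g \<ge> 1" using b by (simp add: g_def field_simps)
  have gb: "g * b = g - 1" using b by (simp add: g_def field_simps)
  have g1b: "g * (1 - b) = 1" using b by (simp add: g_def field_simps)
  define D where "D = c / (g * 2 powr (g - 1))"
  have Dpos: "D > 0" using c g1 by (simp add: D_def)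
  define C where "C = min (\<Phi> 0) (D powr g)"
  have Cpos: "C > 0" using P0 Dpos by (simp add: C_def)
  have CD: "C powr (1 - b) \<le> D"
  proof -
    have "C powr (1 - b) \<le> (D powr g) powr (1 - b)"
      using Cpos b by (intro powr_mono2) (auto simp: C_def)
    also have "\<dots> = D" using Dpos by (simp add: powr_powr g1b)
    finally show ?thesis .
  qed
  have Csplit: "C = C powr b * C powr (1 - b)"
    using Cpos by (simp add: powr_add[symmetric])
  have key: "C * g * 2 powr (g - 1) \<le> c * C powr b"
  proof -
    have "C * g * 2 powr (g - 1) = C powr b * (C powr (1 - b) * (g * 2 powr (g - 1)))"
      by (subst Csplit) (simp add: algebra_simps)
    also have "\<dots> \<le> C powr b * (D * (g * 2 powr (g - 1)))"
      using CD g1 by (intro mult_left_mono mult_right_mono) auto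
    also have "\<dots> = C powr b * c" using g1 by (simp add: D_def)
    finally show ?thesis by (simp add: mult.commute)
  qed
  have "C * real (Suc k) powr g \<le> \<Phi> k" for k
  proof (induction k)
    case 0
    then show ?case by (simp add: C_def)
  next
    case (Suc k)
    define n where "n = real (Suc k)"
    have n1: "n \<ge> 1" by (simp add: n_def)
    define X where "X = C * n powr g"
    have Xpos: "X > 0" using Cpos n1 by (simp add: X_def)
    have IH: "X \<le> \<Phi> k" using Suc.IH by (simp add: X_def n_def)
    have "X + c * X powr b \<le> \<Phi> k + c * \<Phi> k powr b"
      using IH Xpos c b by (intro add_mono mult_left_mono powr_mono2) auto
    also have "\<dots> \<le> \<Phi> (Suc k)" by (rule step)
    finally have A: "X + c * X powr b \<le> \<Phi> (Suc k)" .
    have Xb: "X powr b = C powr b * n powr (g - 1)"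
      using Cpos n1 by (simp add: X_def powr_mult powr_powr gb)
    have "(n + 1) powr g - n powr g \<le> g * (n + 1) powr (g - 1) * 1"
      using powr_diff_le[OF g1, of n "n + 1"] n1 by simp
    also have "\<dots> \<le> g * (2 * n) powr (g - 1)"
    proof -
      have "(n + 1) powr (g - 1) \<le> (2 * n) powr (g - 1)"
        using g1 n1 by (intro powr_mono2) auto
      then show ?thesis using g1 by (simp add: mult_left_mono)
    qed
    also have "\<dots> = g * 2 powr (g - 1) * n powr (g - 1)" by (simp add: powr_mult)
    finally have B: "(n + 1) powr g - n powr g \<le> g * 2 powr (g - 1) * n powr (g - 1)" .
    have "C * (n + 1) powr g = X + C * ((n + 1) powr g - n powr g)"
      by (simp add: X_def algebra_simps)
    also have "\<dots> \<le> X + C * (g * 2 powr (g - 1) * n powr (g - 1))"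
      using B Cpos by (intro add_left_mono mult_left_mono) auto
    also have "\<dots> = X + (C * g * 2 powr (g - 1)) * n powr (g - 1)" by (simp add: algebra_simps)
    also have "\<dots> \<le> X + (c * C powr b) * n powr (g - 1)"
      using key by (intro add_left_mono mult_right_mono) auto
    also have "\<dots> = X + c * X powr b" by (simp add: Xb algebra_simps)
    finally have "C * (n + 1) powr g \<le> \<Phi> (Suc k)" using A by linarith
    then show ?case by (simp add: n_def add.commute)
  qed
  then show ?thesis using Cpos unfolding g_def by blast
qed



lemma toeplitz:
  fixes a b lam tau :: "nat \<Rightarrow> real"
  assumes lam: "\<And>k. lam k > 0" and tau0: "tau 0 = 0"
    and tau_rec: "\<And>k. tau (Suc k) = tau k + lam k"
    and a_rec: "\<And>k. a (Suc k) = (1 - lam k / tau (Suc k)) * a k + (lam k / tau (Suc k)) * b (Suc k)"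
    and blim: "b \<longlonglongrightarrow> c"
    and tinf: "filterlim tau at_top sequentially"
  shows "a \<longlonglongrightarrow> c"
proof (rule LIMSEQ_I)
  fix r :: real assume r: "r > 0"
  define e where "e = r / 3"
  have e: "e > 0" using r by (simp add: e_def)
  have taunn: "tau k \<ge> 0" for k
    by (induction k) (use tau0 tau_rec lam in \<open>auto intro: add_nonneg_pos less_imp_le\<close>)
  have taupos: "tau (Suc k) > 0" for k using taunn[of k] lam[of k] tau_rec[of k] by simp
  have rec: "tau (Suc k) * (a (Suc k) - c) = tau k * (a k - c) + lam k * (b (Suc k) - c)" for k
  proof -
    have "tau (Suc k) * (a (Suc k) - c) = (tau (Suc k) - lam k) * a k + lam k * b (Suc k) - tau (Suc k) * c"
      using taupos[of k] unfolding a_rec by (simp add: field_simps)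
    then show ?thesis using tau_rec[of k] by (simp add: algebra_simps)
  qed
  obtain N where N: "\<And>k. k \<ge> N \<Longrightarrow> \<bar>b k - c\<bar> < e"
    using blim e unfolding LIMSEQ_def dist_real_def by blast
  define B where "B = \<bar>tau N * (a N - c)\<bar>"
  have bound: "\<bar>tau (N + j) * (a (N + j) - c)\<bar> \<le> B + e * (tau (N + j) - tau N)" for j
  proof (induction j)
    case 0 then show ?case by (simp add: B_def)
  next
    case (Suc j)
    have d: "\<bar>b (Suc (N + j)) - c\<bar> \<le> e" using N[of "Suc (N + j)"] by simp
    have "\<bar>lam (N + j) * (b (Suc (N + j)) - c)\<bar> \<le> lam (N + j) * e"
      using d lam[of "N + j"] by (simp add: abs_mult mult_left_mono)
    then have "\<bar>tau (Suc (N + j)) * (a (Suc (N + j)) - c)\<bar> \<le> B + e * (tau (N + j) - tau N) + lam (N + j) * e"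
      using Suc.IH rec[of "N + j"] by (smt (verit) abs_triangle_ineq)
    also have "\<dots> = B + e * (tau (Suc (N + j)) - tau N)" using tau_rec[of "N + j"] by (simp add: algebra_simps)
    finally show ?case by simp
  qed
  have "eventually (\<lambda>n. tau n \<ge> B / e + 1) sequentially"
    using tinf unfolding filterlim_at_top by blast
  then obtain M where M: "\<And>n. n \<ge> M \<Longrightarrow> tau n \<ge> B / e + 1" by (auto simp: eventually_sequentially)
  show "\<exists>no. \<forall>n\<ge>no. norm (a n - c) < r"
  proof (rule exI[of _ "max N M"], intro allI impI)
    fix n assume n: "n \<ge> max N M"
    then obtain j where j: "n = N + j" by (metis le_Suc_ex max.boundedE)
    have tn: "tau n \<ge> B / e + 1" using M n by simp
    have Bn: "B \<ge> 0" by (simp add: B_def)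
    have tpos: "tau n > 0" using tn Bn e by (smt (verit) divide_nonneg_pos)
    have "\<bar>tau n * (a n - c)\<bar> \<le> B + e * tau n"
      using bound[of j] j taunn[of N] e by (smt (verit) mult_left_mono)
    then have "tau n * \<bar>a n - c\<bar> \<le> B + e * tau n" using tpos by (simp add: abs_mult)
    then have "\<bar>a n - c\<bar> \<le> B / tau n + e" using tpos by (simp add: field_simps)
    moreover have "B / tau n \<le> e"
    proof -
      have "B \<le> e * tau n" using tn e Bn by (simp add: field_simps)
      then show ?thesis using tpos by (simp add: field_simps)
    qed
    ultimately show "norm (a n - c) < r" unfolding real_norm_def e_def using r by argo
  qed
qed



lemma closure_hull_sub:
  fixes S K :: "'a::real_normed_vector set"
  assumes "S \<subseteq> K" "closed K" "convex K"
  shows "closure (convex hull S) \<subseteq> K"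
  by (meson assms closure_minimal hull_minimal)

lemma halfspace_ge_cc:
  fixes q :: "'a::real_inner"
  shows "closed {x. c \<le> x \<bullet> q}" "convex {x. c \<le> x \<bullet> q}"
    "closed {x. x \<bullet> q \<le> c}" "convex {x. x \<bullet> q \<le> c}"
proof -
  show "closed {x. c \<le> x \<bullet> q}" "closed {x. x \<bullet> q \<le> c}"
    by (intro closed_Collect_le continuous_intros)+
  have "{x. c \<le> x \<bullet> q} = {x. c \<le> q \<bullet> x}" "{x. x \<bullet> q \<le> c} = {x. q \<bullet> x \<le> c}"
    by (auto simp: inner_commute)
  then show "convex {x. c \<le> x \<bullet> q}" "convex {x. x \<bullet> q \<le> c}"
    using convex_halfspace_ge convex_halfspace_le by metis+
qed

lemma min_norm_exists:
  fixes K :: "'a::{real_inner,complete_space} set"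
  assumes "closed K" "convex K" "K \<noteq> {}"
  shows "\<exists>w\<in>K. \<forall>v\<in>K. (norm w)\<^sup>2 \<le> (norm v)\<^sup>2"
proof (rule exists_min_strong[of K _ 0 "1/4"])
  show "continuous_on K (\<lambda>w. (norm w)\<^sup>2)" by (intro continuous_intros)
  fix u v assume uv: "u \<in> K" "v \<in> K"
  have "(1/2) *\<^sub>R (u + v) = (1/2) *\<^sub>R u + (1/2) *\<^sub>R v" by (simp add: scaleR_add_right)
  then have "(1/2) *\<^sub>R (u + v) \<in> K" using convexD[OF assms(2) uv, of "1/2" "1/2"] by simp
  moreover have "(norm ((1/2) *\<^sub>R (u + v)))\<^sup>2 \<le> ((norm u)\<^sup>2 + (norm v)\<^sup>2) / 2 - 1/4 * (norm (u - v))\<^sup>2"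
    unfolding norm_mid_sq by simp
  ultimately show "(1/2) *\<^sub>R (u + v) \<in> K \<and>
     (norm ((1/2) *\<^sub>R (u + v)))\<^sup>2 \<le> ((norm u)\<^sup>2 + (norm v)\<^sup>2) / 2 - 1/4 * (norm (u - v))\<^sup>2"
    by blast
qed (use assms in auto)

lemma nested_hull_inter:
  fixes u :: "nat \<Rightarrow> 'a::{real_inner,complete_space}"
  assumes bnd: "\<And>m. norm (u m) \<le> M" and inf: "infinite A"
  shows "\<exists>w. \<forall>n. w \<in> closure (convex hull (u ` {m\<in>A. n \<le> m}))"
proof -
  define K where "K n = closure (convex hull (u ` {m\<in>A. n \<le> m}))" for n
  have Kcl: "closed (K n)" for n by (simp add: K_def)
  have Kcv: "convex (K n)" for n by (simp add: K_def)
  have Kne: "K n \<noteq> {}" for n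
  proof -
    obtain m where "m \<ge> n" "m \<in> A" using inf unfolding infinite_nat_iff_unbounded_le by blast
    then have "u m \<in> K n" unfolding K_def
      using closure_subset hull_subset by fastforce
    then show ?thesis by blast
  qed
  have Kmono: "n \<le> k \<Longrightarrow> K k \<subseteq> K n" for n k
    unfolding K_def by (intro closure_mono hull_mono) auto
  have Kb: "K n \<subseteq> cball 0 M" for n
    unfolding K_def by (rule closure_hull_sub) (use bnd in auto)
  have "\<exists>w. w \<in> K n \<and> (\<forall>v\<in>K n. (norm w)\<^sup>2 \<le> (norm v)\<^sup>2)" for n
    using min_norm_exists[OF Kcl Kcv Kne] by blast
  then obtain w where w: "\<forall>n. w n \<in> K n \<and> (\<forall>v\<in>K n. (norm (w n))\<^sup>2 \<le> (norm v)\<^sup>2)"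
    using choice[of "\<lambda>n w. w \<in> K n \<and> (\<forall>v\<in>K n. (norm w)\<^sup>2 \<le> (norm v)\<^sup>2)"] by blast
  then have wK: "\<And>n. w n \<in> K n" and wmin: "\<And>n v. v \<in> K n \<Longrightarrow> (norm (w n))\<^sup>2 \<le> (norm v)\<^sup>2"
    by auto
  define m where "m n = (norm (w n))\<^sup>2" for n
  have minc: "incseq m" unfolding incseq_def m_def
    using wmin wK Kmono by blast
  have mb: "m n \<le> M\<^sup>2" for n
  proof -
    have "norm (w n) \<le> M" using wK Kb by (force simp: dist_norm)
    then show ?thesis unfolding m_def by (simp add: power_mono)
  qed
  have "convergent m" using incseq_convergent[OF minc, of "M\<^sup>2"] mb unfolding convergent_def by blast
  then have mC: "Cauchy m" by (simp add: convergent_Cauchy)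
  have wd: "(norm (w n - w k))\<^sup>2 \<le> 2 * (m k - m n)" if "n \<le> k" for n k
  proof -
    have wk: "w k \<in> K n" using wK Kmono that by blast
    have "(1/2) *\<^sub>R (w n) + (1/2) *\<^sub>R (w k) \<in> K n" using convexD[OF Kcv wK wk, of "1/2" "1/2"] by simp
    then have "(1/2) *\<^sub>R (w n + w k) \<in> K n" by (simp add: scaleR_add_right)
    then have "m n \<le> (norm ((1/2) *\<^sub>R (w n + w k)))\<^sup>2" unfolding m_def by (rule wmin)
    then show ?thesis unfolding norm_mid_sq m_def by argo
  qed
  have "Cauchy w"
  proof (rule metric_CauchyI)
    fix e :: real assume e: "e > 0"
    then have "e\<^sup>2 / 4 > 0" by simp
    then obtain N where N: "\<And>a b. a \<ge> N \<Longrightarrow> b \<ge> N \<Longrightarrow> dist (m a) (m b) < e\<^sup>2 / 4"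
      using mC unfolding Cauchy_def by blast
    show "\<exists>N. \<forall>a\<ge>N. \<forall>b\<ge>N. dist (w a) (w b) < e"
    proof (intro exI allI impI)
      fix a b assume ab: "a \<ge> N" "b \<ge> N"
      have "(norm (w a - w b))\<^sup>2 < e\<^sup>2"
      proof (cases "a \<le> b")
        case True
        then have "(norm (w a - w b))\<^sup>2 \<le> 2 * (m b - m a)" by (rule wd)
        moreover have "\<bar>m a - m b\<bar> < e\<^sup>2 / 4" using N[OF ab] by (simp add: dist_real_def)
        ultimately show ?thesis by argo
      next
        case False
        then have "(norm (w b - w a))\<^sup>2 \<le> 2 * (m a - m b)" by (intro wd) auto
        then have "(norm (w a - w b))\<^sup>2 \<le> 2 * (m a - m b)" by (simp add: norm_minus_commute)
        moreover have "\<bar>m a - m b\<bar> < e\<^sup>2 / 4" using N[OF ab] by (simp add: dist_real_def)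
        ultimately show ?thesis by argo
      qed
      then have "norm (w a - w b) < e" using e by (simp add: power_less_imp_less_base)
      then show "dist (w a) (w b) < e" by (simp add: dist_norm)
    qed
  qed
  then obtain z where lim: "w \<longlonglongrightarrow> z" using convergent_eq_Cauchy by blast
  have "z \<in> K n" for n
  proof -
    have A: "(\<lambda>k. w (k + n)) \<longlonglongrightarrow> z" using lim by (rule LIMSEQ_ignore_initial_segment)
    have B: "\<forall>k. w (k + n) \<in> K n"
    proof
      fix k show "w (k + n) \<in> K n" using wK[of "k + n"] Kmono[of n "k + n"] by auto
    qed
    show ?thesis using closed_sequentially[OF Kcl[of n] B[rule_format] A] .
  qed
  then have "\<forall>n. z \<in> closure (convex hull (u ` {m\<in>A. n \<le> m}))" by (simp add: K_def)
  then show ?thesis by (rule exI)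
qed

lemma inter_hull_tendsto:
  fixes y :: "nat \<Rightarrow> 'a::real_inner"
  assumes lim: "(\<lambda>k. y k \<bullet> q) \<longlonglongrightarrow> L"
    and x: "\<And>n. x \<in> closure (convex hull (y ` {m. n \<le> m}))"
  shows "x \<bullet> q = L"
proof -
  have "\<bar>x \<bullet> q - L\<bar> \<le> e" if e: "e > 0" for e
  proof -
    obtain N where N: "\<And>k. k \<ge> N \<Longrightarrow> \<bar>y k \<bullet> q - L\<bar> < e"
      using lim e unfolding LIMSEQ_def dist_real_def by blast
    have "closure (convex hull (y ` {m. N \<le> m})) \<subseteq> {z. z \<bullet> q \<le> L + e} \<inter> {z. L - e \<le> z \<bullet> q}"
    proof (rule closure_hull_sub)
      show "y ` {m. N \<le> m} \<subseteq> {z. z \<bullet> q \<le> L + e} \<inter> {z. L - e \<le> z \<bullet> q}"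
      proof
        fix z assume "z \<in> y ` {m. N \<le> m}"
        then obtain k where "k \<ge> N" "z = y k" by auto
        then have "\<bar>z \<bullet> q - L\<bar> < e" using N by simp
        then show "z \<in> {z. z \<bullet> q \<le> L + e} \<inter> {z. L - e \<le> z \<bullet> q}" by (auto simp: abs_less_iff)
      qed
      show "closed ({z. z \<bullet> q \<le> L + e} \<inter> {z. L - e \<le> z \<bullet> q})"
        by (intro closed_Int halfspace_ge_cc)
      show "convex ({z. z \<bullet> q \<le> L + e} \<inter> {z. L - e \<le> z \<bullet> q})"
        by (intro convex_Int halfspace_ge_cc)
    qed
    then have "x \<in> {z. z \<bullet> q \<le> L + e} \<inter> {z. L - e \<le> z \<bullet> q}" using x[of N] by blast
    then show ?thesis by (simp add: abs_le_iff)
  qed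
  then have "\<bar>x \<bullet> q - L\<bar> \<le> 0" by (rule field_le_epsilon) simp
  then show ?thesis by simp
qed




lemma opial:
  fixes y :: "nat \<Rightarrow> 'a::{real_inner,complete_space}" and P :: "'a \<Rightarrow> bool"
  assumes bnd: "\<And>m. norm (y m) \<le> M"
    and conv: "\<And>w. P w \<Longrightarrow> convergent (\<lambda>k. (norm (y k - w))\<^sup>2)"
    and clus: "\<And>w. (\<And>n. w \<in> closure (convex hull (y ` {m. n \<le> m}))) \<Longrightarrow> P w"
  shows "\<exists>z. P z \<and> (\<forall>v. (\<lambda>k. y k \<bullet> v) \<longlonglongrightarrow> z \<bullet> v)"
proof -
  define K where "K n = closure (convex hull (y ` {m. n \<le> m}))" for n
  obtain w where w0: "\<forall>n. w \<in> closure (convex hull (y ` {m\<in>UNIV. n \<le> m}))"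
    using nested_hull_inter[of y M UNIV] bnd by auto
  then have wK: "\<And>n. w \<in> K n" unfolding K_def by simp
  have Pw: "P w" using wK clus unfolding K_def by blast
  have uniq: "w' = w" if P': "P w'" and w'K: "\<And>n. w' \<in> K n" for w'
  proof -
    define q where "q = w' - w"
    obtain L1 where L1: "(\<lambda>k. (norm (y k - w))\<^sup>2) \<longlonglongrightarrow> L1" using conv[OF Pw] unfolding convergent_def by blast
    obtain L2 where L2: "(\<lambda>k. (norm (y k - w'))\<^sup>2) \<longlonglongrightarrow> L2" using conv[OF P'] unfolding convergent_def by blast
    have eq: "y k \<bullet> q = ((norm (y k - w))\<^sup>2 - (norm (y k - w'))\<^sup>2 - w \<bullet> w + w' \<bullet> w') / 2" for k
      unfolding q_def power2_norm_eq_inner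
      by (simp add: inner_diff_left inner_diff_right inner_commute algebra_simps)
    have "(\<lambda>k. ((norm (y k - w))\<^sup>2 - (norm (y k - w'))\<^sup>2 - w \<bullet> w + w' \<bullet> w') / 2)
          \<longlonglongrightarrow> (L1 - L2 - w \<bullet> w + w' \<bullet> w') / 2"
      by (intro tendsto_intros L1 L2) simp
    then have lim: "(\<lambda>k. y k \<bullet> q) \<longlonglongrightarrow> (L1 - L2 - w \<bullet> w + w' \<bullet> w') / 2"
      unfolding eq .
    have a: "w \<bullet> q = (L1 - L2 - w \<bullet> w + w' \<bullet> w') / 2"
      using inter_hull_tendsto[OF lim] wK unfolding K_def by blast
    have b: "w' \<bullet> q = (L1 - L2 - w \<bullet> w + w' \<bullet> w') / 2"
      using inter_hull_tendsto[OF lim] w'K unfolding K_def by blast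
    have "q \<bullet> q = w' \<bullet> q - w \<bullet> q" unfolding q_def by (simp add: inner_diff_left)
    then have "q \<bullet> q = 0" using a b by simp
    then show ?thesis unfolding q_def by simp
  qed
  have contra: False if inf: "infinite {k. e \<le> (y k - w) \<bullet> v'}" and e: "e > 0" for v' e
  proof -
    obtain w' where w'0: "\<forall>n. w' \<in> closure (convex hull (y ` {m\<in>{k. e \<le> (y k - w) \<bullet> v'}. n \<le> m}))"
      using nested_hull_inter[of y M "{k. e \<le> (y k - w) \<bullet> v'}"] bnd inf by blast
    have w'K: "w' \<in> K n" for n
    proof -
      have "closure (convex hull (y ` {m\<in>{k. e \<le> (y k - w) \<bullet> v'}. n \<le> m})) \<subseteq> K n"
        unfolding K_def by (intro closure_mono hull_mono image_mono) auto
      then show ?thesis using w'0 by blast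
    qed
    have "P w'" using w'K clus unfolding K_def by blast
    then have "w' = w" using uniq w'K by blast
    have "closure (convex hull (y ` {m\<in>{k. e \<le> (y k - w) \<bullet> v'}. 0 \<le> m})) \<subseteq> {z. w \<bullet> v' + e \<le> z \<bullet> v'}"
    proof (rule closure_hull_sub)
      show "y ` {m\<in>{k. e \<le> (y k - w) \<bullet> v'}. 0 \<le> m} \<subseteq> {z. w \<bullet> v' + e \<le> z \<bullet> v'}"
        by (auto simp: inner_diff_left)
    qed (rule halfspace_ge_cc)+
    then have "w \<bullet> v' + e \<le> w' \<bullet> v'" using w'0 by blast
    then show False using \<open>w' = w\<close> e by simp
  qed
  have "(\<lambda>k. y k \<bullet> v) \<longlonglongrightarrow> w \<bullet> v" for v
  proof (rule ccontr)
    assume nl: "\<not> (\<lambda>k. y k \<bullet> v) \<longlonglongrightarrow> w \<bullet> v"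
    then obtain e where e: "e > 0" and fr: "\<And>N. \<exists>k\<ge>N. e \<le> \<bar>(y k - w) \<bullet> v\<bar>"
      unfolding LIMSEQ_def dist_real_def by (auto simp: inner_diff_left not_less)
    have "infinite {k. e \<le> \<bar>(y k - w) \<bullet> v\<bar>}"
      unfolding infinite_nat_iff_unbounded_le using fr by blast
    moreover have "{k. e \<le> \<bar>(y k - w) \<bullet> v\<bar>} = {k. e \<le> (y k - w) \<bullet> v} \<union> {k. e \<le> (y k - w) \<bullet> (- v)}"
      by (auto simp: abs_if)
    ultimately have "infinite {k. e \<le> (y k - w) \<bullet> v} \<or> infinite {k. e \<le> (y k - w) \<bullet> (- v)}"
      by auto
    then show False using contra e by blast
  qed
  then show ?thesis using Pw by blast
qed




lemma inner_id:
  fixes a b :: "'a::real_inner"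
  shows "a \<bullet> b = ((norm (a + b))\<^sup>2 - (norm b)\<^sup>2 - (norm a)\<^sup>2) / 2"
  unfolding power2_norm_eq_inner
  by (simp add: inner_add_left inner_add_right inner_commute)

locale alg =
  fixes f :: "'a::{real_inner, complete_space} \<Rightarrow> real"
    and gradf :: "'a \<Rightarrow> 'a"
    and p :: real
    and x y :: "nat \<Rightarrow> 'a" and ym1 :: 'a
    and lam tau :: "nat \<Rightarrow> real"
  assumes convex: "convex_on UNIV f"
    and grad: "\<And>u. (f has_derivative (\<lambda>h. gradf u \<bullet> h)) (at u)"
    and S_ne: "\<exists>z. \<forall>u. f z \<le> f u"
    and p: "p \<ge> 1"
    and y_init: "y 0 \<noteq> ym1"
    and lam_def: "\<And>k. lam k = norm (y k - (if k = 0 then ym1 else y (k - 1))) powr (- ((p - 1) / p))"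
    and y_rec: "\<And>k. y (Suc k) = prox (lam k) f (y k)"
    and tau0: "tau 0 = 0"
    and tau_rec: "\<And>k. tau (Suc k) = tau k + lam k"
    and x_rec: "\<And>k. x (Suc k) = (1 - lam k / tau (Suc k)) *\<^sub>R x k + (lam k / tau (Suc k)) *\<^sub>R y (Suc k)"
    and grad_nz: "\<And>k. gradf (y k) \<noteq> 0"
begin

definition G :: "nat \<Rightarrow> 'a" where "G k = gradf (y (Suc k))"

lemma lam_pos: "lam k > 0"
proof (induction k)
  case 0
  then show ?case using lam_def[of 0] y_init by simp
next
  case (Suc k)
  define g where "g = gradf (y (Suc k))"
  have "y (Suc k) = y k - lam k *\<^sub>R g"
    unfolding g_def y_rec by (rule prox_char[OF convex grad S_ne Suc])
  then have "y (Suc k) - y k = - (lam k *\<^sub>R g)" by simp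
  moreover have "lam k *\<^sub>R g \<noteq> 0" using Suc grad_nz unfolding g_def by simp
  ultimately have "y (Suc k) - y k \<noteq> 0" by simp
  then show ?case using lam_def[of "Suc k"] by simp
qed

lemma step: "y (Suc k) = y k - lam k *\<^sub>R G k"
  unfolding y_rec G_def by (rule prox_char[OF convex grad S_ne lam_pos])

lemma step': "y k - y (Suc k) = lam k *\<^sub>R G k"
  using step[of k] by (simp add: algebra_simps)

lemma gi: "f u + gradf u \<bullet> (v - u) \<le> f v"
  by (rule grad_ineq[OF convex grad])

lemma descent: "f (y (Suc k)) + lam k * (norm (G k))\<^sup>2 \<le> f (y k)"
proof -
  have "f (y (Suc k)) + G k \<bullet> (y k - y (Suc k)) \<le> f (y k)" using gi unfolding G_def .
  moreover have "G k \<bullet> (y k - y (Suc k)) = lam k * (norm (G k))\<^sup>2"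
    unfolding step' by (simp add: power2_norm_eq_inner)
  ultimately show ?thesis by simp
qed

lemma dnorm: "norm (y k - y (Suc k)) = lam k * norm (G k)"
  unfolding step' using lam_pos[of k] by simp

lemma three_point:
  "lam k * (f (y (Suc k)) - f u) \<le> ((norm (y k - u))\<^sup>2 - (norm (y (Suc k) - u))\<^sup>2 - (norm (y k - y (Suc k)))\<^sup>2) / 2"
proof -
  have g: "f (y (Suc k)) + G k \<bullet> (u - y (Suc k)) \<le> f u" using gi unfolding G_def .
  have "lam k * (f (y (Suc k)) - f u) \<le> lam k * (G k \<bullet> (y (Suc k) - u))"
  proof -
    have "f (y (Suc k)) - f u \<le> G k \<bullet> (y (Suc k) - u)"
      using g by (simp add: inner_diff_right)
    then show ?thesis using lam_pos[of k] by (simp add: mult_left_mono)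
  qed
  also have "\<dots> = (y k - y (Suc k)) \<bullet> (y (Suc k) - u)" unfolding step' by simp
  also have "\<dots> = ((norm (y k - u))\<^sup>2 - (norm (y (Suc k) - u))\<^sup>2 - (norm (y k - y (Suc k)))\<^sup>2) / 2"
    using inner_id[of "y k - y (Suc k)" "y (Suc k) - u"] by simp
  finally show ?thesis .
qed

lemma tau_nn: "tau k \<ge> 0"
  by (induction k) (use tau0 tau_rec lam_pos in \<open>auto intro: add_nonneg_pos less_imp_le\<close>)

lemma tau_pos: "tau (Suc k) > 0"
  using tau_nn[of k] lam_pos[of k] tau_rec[of k] by simp

lemma tau_mono: "tau k \<le> tau (Suc k)"
  using lam_pos[of k] tau_rec[of k] by simp

definition zs :: 'a where "zs = (SOME z. \<forall>u. f z \<le> f u)"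

lemma zs_min: "f zs \<le> f u"
  using someI_ex[OF S_ne] unfolding zs_def by blast

definition R :: real where "R = norm (y 0 - zs)"

definition E :: "nat \<Rightarrow> real" where
  "E k = tau k * (f (y k) - f zs) + (norm (y k - zs))\<^sup>2 / 2"

lemma E_step: "E (Suc k) + (tau k * lam k + (lam k)\<^sup>2 / 2) * (norm (G k))\<^sup>2 \<le> E k"
proof -
  define g where "g = (norm (G k))\<^sup>2"
  define A where "A = f (y (Suc k)) - f zs"
  define B where "B = f (y k) - f zs"
  have d: "A + lam k * g \<le> B" using descent[of k] unfolding A_def B_def g_def by simp
  have "tau k * (A + lam k * g) \<le> tau k * B" using d tau_nn[of k] by (rule mult_left_mono)
  then have d2: "tau k * A + tau k * lam k * g \<le> tau k * B" by (simp add: algebra_simps)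
  have t: "lam k * A \<le> ((norm (y k - zs))\<^sup>2 - (norm (y (Suc k) - zs))\<^sup>2 - (lam k)\<^sup>2 * g) / 2"
    using three_point[of k zs] unfolding A_def g_def dnorm by (simp add: power_mult_distrib)
  have "E (Suc k) = tau k * A + lam k * A + (norm (y (Suc k) - zs))\<^sup>2 / 2"
    unfolding E_def A_def tau_rec by (simp add: algebra_simps)
  moreover have "E k = tau k * B + (norm (y k - zs))\<^sup>2 / 2" unfolding E_def B_def by simp
  moreover have "(tau k * lam k + (lam k)\<^sup>2 / 2) * g = tau k * lam k * g + (lam k)\<^sup>2 * g / 2"
    by (simp add: algebra_simps)
  ultimately show ?thesis using d2 t unfolding g_def[symmetric] by argo
qed


lemma E0: "E 0 = R\<^sup>2 / 2" unfolding E_def R_def tau0 by simp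

lemma E_nn: "E k \<ge> 0"
  unfolding E_def using tau_nn[of k] zs_min[of "y k"] by simp

lemma E_sum: "E n + (\<Sum>k<n. (tau k * lam k + (lam k)\<^sup>2 / 2) * (norm (G k))\<^sup>2) \<le> R\<^sup>2 / 2"
proof (induction n)
  case 0 then show ?case by (simp add: E0)
next
  case (Suc n)
  then show ?case using E_step[of n] by simp
qed

lemma G_mono: "norm (G (Suc k)) \<le> norm (G k)"
proof -
  define a where "a = y (Suc k)"
  define b where "b = y (Suc (Suc k))"
  have ga: "G k = gradf a" and gb: "G (Suc k) = gradf b" unfolding G_def a_def b_def by simp_all
  have 1: "f a + gradf a \<bullet> (b - a) \<le> f b" by (rule gi)
  have 2: "f b + gradf b \<bullet> (a - b) \<le> f a" by (rule gi)
  have m: "(gradf b - gradf a) \<bullet> (a - b) \<le> 0"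
  proof -
    have "gradf a \<bullet> (b - a) + gradf b \<bullet> (a - b) \<le> 0" using 1 2 by simp
    moreover have "gradf a \<bullet> (b - a) = - (gradf a \<bullet> (a - b))"
      by (simp add: inner_diff_right)
    ultimately show ?thesis by (simp add: inner_diff_left)
  qed
  have ab: "a - b = lam (Suc k) *\<^sub>R G (Suc k)" unfolding a_def b_def by (rule step')
  have "lam (Suc k) * ((gradf b - gradf a) \<bullet> gradf b) \<le> 0"
    using m unfolding ab gb by simp
  then have "(gradf b - gradf a) \<bullet> gradf b \<le> 0"
    using lam_pos[of "Suc k"] by (simp add: mult_le_0_iff)
  then have "gradf b \<bullet> gradf b \<le> gradf a \<bullet> gradf b" by (simp add: inner_diff_left)
  also have "\<dots> \<le> norm (gradf a) * norm (gradf b)" by (rule Cauchy_Schwarz_ineq2[THEN abs_le_D1])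
  finally have "norm (gradf b) * norm (gradf b) \<le> norm (gradf a) * norm (gradf b)"
    by (simp add: power2_norm_eq_inner[symmetric] power2_eq_square)
  then show ?thesis unfolding ga gb using grad_nz[of "Suc (Suc k)"] b_def
    by (simp add: mult_le_cancel_right)
qed

lemma G_anti: "k \<le> n \<Longrightarrow> norm (G n) \<le> norm (G k)"
  by (induction n rule: dec_induct) (auto intro: order_trans[OF G_mono])

lemma tau_sq: "(\<Sum>k<n. tau k * lam k + (lam k)\<^sup>2 / 2) = (tau n)\<^sup>2 / 2"
proof (induction n)
  case 0 then show ?case by (simp add: tau0)
next
  case (Suc n)
  then show ?case by (simp add: tau_rec power2_eq_square algebra_simps)
qed

lemma gbound: "tau (Suc n) * norm (G n) \<le> R"
proof -
  have "(norm (G n))\<^sup>2 * ((tau (Suc n))\<^sup>2 / 2) = (\<Sum>k<Suc n. (tau k * lam k + (lam k)\<^sup>2 / 2) * (norm (G n))\<^sup>2)"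
    unfolding tau_sq[symmetric] by (simp add: sum_distrib_left algebra_simps)
  also have "\<dots> \<le> (\<Sum>k<Suc n. (tau k * lam k + (lam k)\<^sup>2 / 2) * (norm (G k))\<^sup>2)"
  proof (rule sum_mono)
    fix k assume "k \<in> {..<Suc n}"
    then have "norm (G n) \<le> norm (G k)" by (intro G_anti) auto
    then have "(norm (G n))\<^sup>2 \<le> (norm (G k))\<^sup>2" by (simp add: power_mono)
    moreover have "tau k * lam k + (lam k)\<^sup>2 / 2 \<ge> 0" using tau_nn[of k] lam_pos[of k] by simp
    ultimately show "(tau k * lam k + (lam k)\<^sup>2 / 2) * (norm (G n))\<^sup>2 \<le> (tau k * lam k + (lam k)\<^sup>2 / 2) * (norm (G k))\<^sup>2"
      by (simp add: mult_left_mono)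
  qed
  also have "\<dots> \<le> R\<^sup>2 / 2" using E_sum[of "Suc n"] E_nn[of "Suc n"] by simp
  finally have "(tau (Suc n) * norm (G n))\<^sup>2 \<le> R\<^sup>2" by (simp add: power_mult_distrib algebra_simps)
  moreover have "R \<ge> 0" unfolding R_def by simp
  ultimately show ?thesis by (simp add: power2_le_iff_abs_le)
qed

lemma Rpos: "R > 0"
proof -
  have "tau (Suc 0) * norm (G 0) > 0" using tau_pos[of 0] grad_nz[of 1] unfolding G_def by simp
  then show ?thesis using gbound[of 0] by simp
qed

lemma f_y_bound: "tau n * (f (y n) - f zs) \<le> R\<^sup>2 / 2"
  using E_sum[of n] sum_nonneg[of "{..<n}" "\<lambda>k. (tau k * lam k + (lam k)\<^sup>2 / 2) * (norm (G k))\<^sup>2"]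
    tau_nn lam_pos unfolding E_def
  by (smt (verit) divide_nonneg_pos mult_nonneg_nonneg zero_le_power2)

lemma x_bound: "tau n * (f (x n) - f zs) + (norm (y n - zs))\<^sup>2 / 2 \<le> R\<^sup>2 / 2"
proof (induction n)
  case 0 then show ?case by (simp add: tau0 R_def)
next
  case (Suc k)
  define t where "t = lam k / tau (Suc k)"
  have t01: "0 \<le> t" "t \<le> 1" using lam_pos[of k] tau_pos[of k] tau_nn[of k] tau_rec[of k]
    by (auto simp: t_def)
  have cv: "f (x (Suc k)) \<le> (1 - t) * f (x k) + t * f (y (Suc k))"
    unfolding x_rec t_def[symmetric] using convex_onD[OF convex t01] by simp
  have tt: "tau (Suc k) * (1 - t) = tau k" "tau (Suc k) * t = lam k"
    using tau_pos[of k] tau_rec[of k] by (auto simp: t_def field_simps)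
  have "tau (Suc k) * f (x (Suc k)) \<le> tau (Suc k) * ((1 - t) * f (x k) + t * f (y (Suc k)))"
    using cv tau_pos[of k] by (simp add: mult_left_mono)
  also have "\<dots> = (tau (Suc k) * (1 - t)) * f (x k) + (tau (Suc k) * t) * f (y (Suc k))"
    by (simp only: distrib_left mult.assoc)
  also have "\<dots> = tau k * f (x k) + lam k * f (y (Suc k))"
    unfolding tt ..
  finally have a: "tau (Suc k) * f (x (Suc k)) \<le> tau k * f (x k) + lam k * f (y (Suc k))" .
  have b: "lam k * (f (y (Suc k)) - f zs) \<le> ((norm (y k - zs))\<^sup>2 - (norm (y (Suc k) - zs))\<^sup>2) / 2"
    using three_point[of k zs] by (smt (verit) zero_le_power2 divide_right_mono)
  have c: "tau (Suc k) * (f (x (Suc k)) - f zs) = tau (Suc k) * f (x (Suc k)) - tau k * f zs - lam k * f zs"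
    using tau_rec[of k] by (simp add: algebra_simps)
  have d: "lam k * (f (y (Suc k)) - f zs) = lam k * f (y (Suc k)) - lam k * f zs" by (simp add: algebra_simps)
  have e: "tau k * (f (x k) - f zs) = tau k * f (x k) - tau k * f zs" by (simp add: algebra_simps)
  show ?case using Suc.IH a b c d e by argo
qed

lemma f_x_bound: "tau n * (f (x n) - f zs) \<le> R\<^sup>2 / 2"
  using x_bound[of n] by (smt (verit) zero_le_power2 divide_nonneg_pos)


definition aa :: real where "aa = (p - 1) / p"

lemma aa: "0 \<le> aa" "aa < 1"
  using p by (auto simp: aa_def field_simps)

lemma lam_Suc: "lam (Suc k) = norm (y (Suc k) - y k) powr (- aa)"
  using lam_def[of "Suc k"] by (simp add: aa_def)

lemma lam_lower: "(tau (Suc k) / (R * lam k)) powr aa \<le> lam (Suc k)"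
proof -
  have lk: "lam k > 0" by (rule lam_pos)
  have tk: "tau (Suc k) > 0" by (rule tau_pos)
  have gk: "norm (G k) \<le> R / tau (Suc k)" using gbound[of k] tk by (simp add: field_simps)
  have d: "norm (y (Suc k) - y k) = lam k * norm (G k)" using dnorm[of k] by (simp add: norm_minus_commute)
  have dpos: "norm (y (Suc k) - y k) > 0" using d lk grad_nz[of "Suc k"] unfolding G_def by simp
  have dle: "norm (y (Suc k) - y k) \<le> lam k * R / tau (Suc k)"
  proof -
    have "lam k * norm (G k) \<le> lam k * (R / tau (Suc k))" using mult_left_mono[OF gk less_imp_le[OF lk]] .
    then show ?thesis using d by simp
  qed
  have "(lam k * R / tau (Suc k)) powr (- aa) \<le> norm (y (Suc k) - y k) powr (- aa)"
    using dpos dle aa by (intro powr_mono2') auto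
  moreover have "(lam k * R / tau (Suc k)) powr (- aa) = (tau (Suc k) / (R * lam k)) powr aa"
    by (simp add: powr_minus_divide powr_divide powr_mult)
  ultimately show ?thesis using lam_Suc[of k] by simp
qed

definition bb :: real where "bb = aa / (1 + aa)"

lemma bb: "0 \<le> bb" "bb < 1" using aa by (auto simp: bb_def field_simps)

lemma maxstep: "(tau (Suc k) / R) powr bb \<le> max (lam k) (lam (Suc k))"
proof -
  define Mx where "Mx = max (lam k) (lam (Suc k))"
  have lk: "lam k > 0" by (rule lam_pos)
  have Mpos: "Mx > 0" using lk by (simp add: Mx_def)
  have "(tau (Suc k) / R) powr aa = (tau (Suc k) / (R * lam k)) powr aa * lam k powr aa"
  proof -
    have "tau (Suc k) / R = (tau (Suc k) / (R * lam k)) * lam k" using lk by simp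
    then show ?thesis by (metis powr_mult)
  qed
  also have "\<dots> \<le> lam (Suc k) * lam k powr aa"
    using lam_lower[of k] by (simp add: mult_right_mono)
  also have "\<dots> \<le> Mx * Mx powr aa"
    using lk aa by (intro mult_mono powr_mono2) (auto simp: Mx_def)
  also have "\<dots> = Mx powr (1 + aa)" using Mpos by (simp add: powr_add)
  finally have A: "(tau (Suc k) / R) powr aa \<le> Mx powr (1 + aa)" .
  have "((tau (Suc k) / R) powr aa) powr (1 / (1 + aa)) \<le> (Mx powr (1 + aa)) powr (1 / (1 + aa))"
    using A aa by (intro powr_mono2) auto
  also have "\<dots> = Mx" using Mpos aa by (simp add: powr_powr)
  finally show ?thesis unfolding Mx_def bb_def by (simp add: powr_powr)
qed

definition Phi :: "nat \<Rightarrow> real" where "Phi k = tau (Suc k) + tau k"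

lemma Phi_step: "Phi k + (1 / (2 * R)) powr bb * Phi k powr bb \<le> Phi (Suc k)"
proof -
  have Rp: "R > 0" by (rule Rpos)
  have Pnn: "Phi k \<ge> 0" using tau_nn[of k] tau_nn[of "Suc k"] by (simp add: Phi_def)
  have "(1 / (2 * R)) powr bb * Phi k powr bb = (Phi k / (2 * R)) powr bb"
    by (simp add: powr_mult[symmetric])
  also have "\<dots> \<le> (tau (Suc k) / R) powr bb"
  proof (rule powr_mono2)
    show "0 \<le> bb" by (rule bb)
    show "0 \<le> Phi k / (2 * R)" using Pnn Rp by simp
    have "Phi k \<le> 2 * tau (Suc k)" using tau_mono[of k] by (simp add: Phi_def)
    then show "Phi k / (2 * R) \<le> tau (Suc k) / R" using Rp by (simp add: field_simps)
  qed
  also have "\<dots> \<le> max (lam k) (lam (Suc k))" by (rule maxstep)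
  also have "\<dots> \<le> lam k + lam (Suc k)" using lam_pos[of k] lam_pos[of "Suc k"] by simp
  finally show ?thesis unfolding Phi_def using tau_rec[of k] tau_rec[of "Suc k"] by simp
qed

lemma gamma: "1 / (1 - bb) = 2 - 1 / p"
  using p aa unfolding bb_def aa_def by (simp add: field_simps)

lemma tau_growth: "\<exists>C>0. \<forall>k. C * real (Suc k) powr (2 - 1 / p) \<le> tau (Suc k)"
proof -
  have "\<exists>C>0. \<forall>k. C * real (Suc k) powr (1 / (1 - bb)) \<le> Phi k"
  proof (rule growth)
    show "Phi 0 > 0" using tau_pos[of 0] by (simp add: Phi_def tau0)
    show "(1 / (2 * R)) powr bb > 0" using Rpos by simp
    show "0 \<le> bb" "bb < 1" by (rule bb)+
    show "\<And>k. Phi k + (1 / (2 * R)) powr bb * Phi k powr bb \<le> Phi (Suc k)" by (rule Phi_step)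
  qed
  then obtain C where C: "C > 0" "\<And>k. C * real (Suc k) powr (2 - 1 / p) \<le> Phi k"
    unfolding gamma by blast
  have "(C / 2) * real (Suc k) powr (2 - 1 / p) \<le> tau (Suc k)" for k
    using C(2)[of k] tau_mono[of k] unfolding Phi_def by simp
  then show ?thesis using C(1) by (intro exI[of _ "C / 2"]) auto
qed


lemma INF_eq: "(INF u. f u) = f zs"
  by (rule cInf_eq_minimum) (auto simp: zs_min)

lemma rate: "(\<lambda>k. f (x k) - (INF u. f u)) \<in> O(\<lambda>k. real k powr (- (2 - 1 / p)))"
proof -
  obtain C where C: "C > 0" "\<And>k. C * real (Suc k) powr (2 - 1 / p) \<le> tau (Suc k)"
    using tau_growth by blast
  define g where "g = 2 - 1 / p"
  have "norm (f (x k) - (INF u. f u)) \<le> (R\<^sup>2 / (2 * C)) * norm (real k powr (- g))" if k: "k \<ge> 1" for k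
  proof -
    obtain j where j: "k = Suc j" using k by (cases k) auto
    have kg: "real k powr g > 0" using k by simp
    have tk: "C * real k powr g \<le> tau k" using C(2)[of j] j by (simp add: g_def)
    have tpos: "tau k > 0" using tau_pos[of j] j by simp
    have nn: "f (x k) - f zs \<ge> 0" using zs_min by simp
    have "f (x k) - f zs \<le> R\<^sup>2 / 2 / tau k" using f_x_bound[of k] tpos by (simp add: field_simps)
    also have "\<dots> \<le> R\<^sup>2 / 2 / (C * real k powr g)"
      using tk C(1) kg tpos by (intro divide_left_mono mult_pos_pos) auto
    also have "\<dots> = (R\<^sup>2 / (2 * C)) * real k powr (- g)"
      by (simp add: powr_minus_divide)
    finally show ?thesis using nn unfolding INF_eq by simp
  qed
  then have "eventually (\<lambda>k. norm (f (x k) - (INF u. f u)) \<le> (R\<^sup>2 / (2 * C)) * norm (real k powr (- g))) at_top"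
    unfolding eventually_at_top_linorder by blast
  then show ?thesis unfolding g_def by (rule bigoI)
qed

lemma fy_anti: "k \<le> n \<Longrightarrow> f (y n) \<le> f (y k)"
proof (induction n rule: dec_induct)
  case base then show ?case by simp
next
  case (step n)
  have "f (y (Suc n)) \<le> f (y n)"
    using descent[of n] mult_nonneg_nonneg[OF less_imp_le[OF lam_pos[of n]] zero_le_power2[of "norm (G n)"]]
    by argo
  then show ?case using step by simp
qed

lemma tau_inf: "filterlim tau at_top sequentially"
proof -
  obtain C where C: "C > 0" "\<And>k. C * real (Suc k) powr (2 - 1 / p) \<le> tau (Suc k)"
    using tau_growth by blast
  have le: "C * real k \<le> tau k" for k
  proof (cases k)
    case 0 then show ?thesis by (simp add: tau0)
  next
    case (Suc j)
    have "real k powr 1 \<le> real k powr (2 - 1 / p)"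
      using p Suc by (intro powr_mono) (auto simp: field_simps)
    then have "real k \<le> real k powr (2 - 1 / p)" using Suc by simp
    then have "C * real k \<le> C * real k powr (2 - 1 / p)" using C(1) by simp
    then show ?thesis using C(2)[of j] Suc by simp
  qed
  have lim: "filterlim (\<lambda>k. C * real k) at_top sequentially"
    by (rule filterlim_tendsto_pos_mult_at_top[OF tendsto_const C(1) filterlim_real_sequentially])
  show ?thesis
  proof (rule filterlim_at_top_mono[OF lim])
    show "eventually (\<lambda>k. C * real k \<le> tau k) sequentially" using le by simp
  qed
qed

lemma fy_lim: "(\<lambda>n. f (y n)) \<longlonglongrightarrow> f zs"
proof (rule tendsto_sandwich[where f="\<lambda>n. f zs" and h="\<lambda>n. f zs + (R\<^sup>2 / 2) / tau n"])
  show "eventually (\<lambda>n. f zs \<le> f (y n)) sequentially" using zs_min by simp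
  have "f (y n) \<le> f zs + (R\<^sup>2 / 2) / tau n" if n: "n \<ge> 1" for n
  proof -
    obtain j where "n = Suc j" using n by (cases n) auto
    then have tp: "tau n > 0" using tau_pos by simp
    then show ?thesis using f_y_bound[of n] by (simp add: field_simps)
  qed
  then show "eventually (\<lambda>n. f (y n) \<le> f zs + (R\<^sup>2 / 2) / tau n) sequentially"
    unfolding eventually_sequentially by blast
  show "(\<lambda>n. f zs) \<longlonglongrightarrow> f zs" by simp
  have "(\<lambda>n. (R\<^sup>2 / 2) / tau n) \<longlonglongrightarrow> 0"
    by (rule tendsto_divide_0[OF tendsto_const filterlim_at_top_imp_at_infinity[OF tau_inf]])
  then have "(\<lambda>n. f zs + (R\<^sup>2 / 2) / tau n) \<longlonglongrightarrow> f zs + 0"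
    by (intro tendsto_add tendsto_const)
  then show "(\<lambda>n. f zs + (R\<^sup>2 / 2) / tau n) \<longlonglongrightarrow> f zs" by simp
qed

lemma fejer: "(\<forall>u. f w \<le> f u) \<Longrightarrow> (norm (y (Suc k) - w))\<^sup>2 \<le> (norm (y k - w))\<^sup>2"
proof -
  assume w: "\<forall>u. f w \<le> f u"
  have "0 \<le> lam k * (f (y (Suc k)) - f w)" using w lam_pos[of k] by simp
  then show ?thesis using three_point[of k w] zero_le_power2[of "norm (y k - y (Suc k))"] by argo
qed

lemma fejer_le:
  assumes w: "\<forall>u. f w \<le> f u" and kn: "k \<le> n"
  shows "(norm (y n - w))\<^sup>2 \<le> (norm (y k - w))\<^sup>2"
  using kn
proof (induction n rule: dec_induct)
  case base then show ?case by simp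
next
  case (step n)
  then show ?case using fejer[OF w, of n] by argo
qed

lemma y_bounded: "norm (y m) \<le> norm zs + R"
proof -
  have "(norm (y m - zs))\<^sup>2 \<le> R\<^sup>2" using fejer_le[of zs 0 m] zs_min unfolding R_def by simp
  then have "norm (y m - zs) \<le> R" using Rpos by (simp add: power2_le_iff_abs_le)
  then show ?thesis using norm_triangle_ineq[of "y m - zs" zs] by simp
qed

lemma fcont: "continuous_on UNIV f"
  using grad has_derivative_continuous continuous_at_imp_continuous_on by blast

lemma sublevel_convex: "convex {v. f v \<le> t}"
  unfolding convex_def
proof (intro allI impI ballI)
  fix u v :: 'a and a b :: real
  assume uv: "u \<in> {v. f v \<le> t}" "v \<in> {v. f v \<le> t}" and ab: "0 \<le> a" "0 \<le> b" "a + b = 1"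
  have "f (a *\<^sub>R u + b *\<^sub>R v) \<le> a * f u + b * f v" using convex ab unfolding convex_on_def by simp
  also have "\<dots> \<le> a * t + b * t" using uv ab by (intro add_mono mult_left_mono) auto
  also have "\<dots> = t" using ab by (simp add: distrib_right[symmetric])
  finally show "a *\<^sub>R u + b *\<^sub>R v \<in> {v. f v \<le> t}" by simp
qed

lemma weak_y: "\<exists>z. (\<forall>u. f z \<le> f u) \<and> (\<forall>v. (\<lambda>k. y k \<bullet> v) \<longlonglongrightarrow> z \<bullet> v)"
proof (rule opial[where M="norm zs + R"])
  show "\<And>m. norm (y m) \<le> norm zs + R" by (rule y_bounded)
  fix w :: 'a
  show "convergent (\<lambda>k. (norm (y k - w))\<^sup>2)" if w: "\<forall>u. f w \<le> f u"
  proof -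
    have "decseq (\<lambda>k. (norm (y k - w))\<^sup>2)" unfolding decseq_def using fejer_le[OF w] by blast
    then obtain L where "(\<lambda>k. (norm (y k - w))\<^sup>2) \<longlonglongrightarrow> L"
      using decseq_convergent[of "\<lambda>k. (norm (y k - w))\<^sup>2" 0] by auto
    then show ?thesis unfolding convergent_def by blast
  qed
  show "\<forall>u. f w \<le> f u" if cl: "\<And>n. w \<in> closure (convex hull (y ` {m. n \<le> m}))"
  proof -
    have "f w \<le> f (y n)" for n
    proof -
      have "closure (convex hull (y ` {m. n \<le> m})) \<subseteq> {v. f v \<le> f (y n)}"
      proof (rule closure_hull_sub)
        show "y ` {m. n \<le> m} \<subseteq> {v. f v \<le> f (y n)}" using fy_anti by auto
        show "closed {v. f v \<le> f (y n)}" by (rule closed_Collect_le[OF fcont continuous_on_const])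
        show "convex {v. f v \<le> f (y n)}" by (rule sublevel_convex)
      qed
      then show ?thesis using cl[of n] by blast
    qed
    then have "\<exists>N. \<forall>n\<ge>N. f w \<le> f (y n)" by blast
    then have "f w \<le> f zs" by (rule LIMSEQ_le_const[OF fy_lim])
    then show ?thesis using zs_min order_trans by blast
  qed
qed

lemma weak_x: "\<exists>z. (\<forall>u. f z \<le> f u) \<and> weak_conv x z"
proof -
  obtain z where z: "\<forall>u. f z \<le> f u" and yl: "\<And>v. (\<lambda>k. y k \<bullet> v) \<longlonglongrightarrow> z \<bullet> v"
    using weak_y by blast
  have "(\<lambda>k. x k \<bullet> v) \<longlonglongrightarrow> z \<bullet> v" for v
  proof (rule toeplitz[where lam=lam and tau=tau and b="\<lambda>k. y k \<bullet> v"])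
    show "\<And>k. lam k > 0" by (rule lam_pos)
    show "tau 0 = 0" by (rule tau0)
    show "\<And>k. tau (Suc k) = tau k + lam k" by (rule tau_rec)
    show "\<And>k. x (Suc k) \<bullet> v = (1 - lam k / tau (Suc k)) * (x k \<bullet> v) + (lam k / tau (Suc k)) * (y (Suc k) \<bullet> v)"
      by (simp add: x_rec inner_add_left)
    show "(\<lambda>k. y k \<bullet> v) \<longlonglongrightarrow> z \<bullet> v" by (rule yl)
    show "filterlim tau at_top sequentially" by (rule tau_inf)
  qed
  then show ?thesis using z unfolding weak_conv_def by blast
qed

end

theorem mainTheorem15:
  fixes f :: "'a::{real_inner, complete_space} \<Rightarrow> real"
    and gradf :: "'a \<Rightarrow> 'a"
    and p :: real
    and x y :: "nat \<Rightarrow> 'a" and ym1 :: 'a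
    and lam tau :: "nat \<Rightarrow> real"
  assumes convex: "convex_on UNIV f"
    and grad: "\<And>u. (f has_derivative (\<lambda>h. gradf u \<bullet> h)) (at u)"
    and grad_cont: "continuous_on UNIV gradf"
    and grad_lip: "\<And>B. bounded B \<Longrightarrow> \<exists>L. \<forall>u\<in>B. \<forall>v\<in>B. norm (gradf u - gradf v) \<le> L * norm (u - v)"
    and S_ne: "\<exists>z. \<forall>u. f z \<le> f u"
    and p: "p \<ge> 1"
    and y_init: "y 0 \<noteq> ym1"
    and lam_def: "\<And>k. lam k = norm (y k - (if k = 0 then ym1 else y (k - 1))) powr (- ((p - 1) / p))"
    and y_rec: "\<And>k. y (Suc k) = prox (lam k) f (y k)"
    and tau0: "tau 0 = 0"
    and tau_rec: "\<And>k. tau (Suc k) = tau k + lam k"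
    and x_rec: "\<And>k. x (Suc k) = (1 - lam k / tau (Suc k)) *\<^sub>R x k + (lam k / tau (Suc k)) *\<^sub>R y (Suc k)"
    and grad_nz: "\<And>k. gradf (y k) \<noteq> 0"
  shows "(\<lambda>k. f (x k) - (INF u. f u)) \<in> O(\<lambda>k. real k powr (- (2 - 1 / p)))
         \<and> (\<exists>z. (\<forall>u. f z \<le> f u) \<and> weak_conv x z)"
proof -
  interpret alg f gradf p x y ym1 lam tau
    using convex grad S_ne p y_init lam_def y_rec tau0 tau_rec x_rec grad_nz
    by unfold_locales auto
  show ?thesis using rate weak_x by blast
qed



end
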